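(* Let $w:\mathbb R^+\times\mathbb R\to\mathbb R^n$ and $f:\mathbb R^n\to\mathbb R^n$ (smooth) define the system of conservation laws $\partial_t w+\partial_x f(w)=0$, where $w=(w_1,w_2)$ with $w_1\in\mathbb R^l$, $w_2\in\mathbb R^{n-l}$, and $f=(0,f_2)$ with $f_2\in\mathbb R^{n-l}$. Assume that $\eta(w)$ is a (smooth) function which is strictly convex with respect to $w_2$ at fixed $w_1$ and such that $\partial_t\eta(w)=0$ for smooth solutions, and that $\nabla_{w_1}f_2(w)=0$. Then the system is hyperbolic.
   Context: Hyperbolic means that for every state $w$ the Jacobian matrix $\nabla_w f(w)$ is diagonalizable with real eigenvalues. *)

theory Defs
  imports "HOL-Analysis.Analysis"
begin

definition real_diagonalizable :: "real^'n^'n \<Rightarrow> bool" where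
  "real_diagonalizable A \<longleftrightarrow>
     (\<exists>P D::real^'n^'n. invertible P \<and> (\<forall>i j. i \<noteq> j \<longrightarrow> D $ i $ j = 0)
        \<and> matrix_inv P ** A ** P = D)"

definition hyperbolic :: "(real^'n \<Rightarrow> real^'n) \<Rightarrow> bool" where
  "hyperbolic f \<longleftrightarrow>
     (\<forall>w. f differentiable (at w) \<and>
          real_diagonalizable (matrix (frechet_derivative f (at w))))"

end

theory Submission
  imports Defs
begin


lemma clairaut_side:
  fixes F :: "real^'n \<Rightarrow> real" and G :: "real^'n \<Rightarrow> real^'n"
  assumes dF: "\<And>x. (F has_derivative (\<lambda>h. G x \<bullet> h)) (at x)"
    and dG: "(G has_derivative L) (at w)"
    and e: "e > 0"
  shows "\<exists>d>0. \<forall>t. 0 < t \<and> t < d \<longrightarrow>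
     \<bar>(F (w + t *\<^sub>R u + t *\<^sub>R v) - F (w + t *\<^sub>R u) - F (w + t *\<^sub>R v) + F w) - t^2 * (L v \<bullet> u)\<bar>
       \<le> e * t^2 * ((2 * norm u + norm v) * norm u)"
proof -
  have bl: "bounded_linear L" and
    lim: "\<forall>e>0. \<exists>d>0. \<forall>y. norm (y - w) < d \<longrightarrow> norm (G y - G w - L (y - w)) \<le> e * norm (y - w)"
    using dG unfolding has_derivative_at_alt by auto
  interpret L: bounded_linear L by (rule bl)
  obtain d where d: "d > 0" and dd: "\<And>y. norm (y - w) < d \<Longrightarrow> norm (G y - G w - L (y - w)) \<le> e * norm (y - w)"
    using lim e by blast
  define d' where "d' = d / (norm u + norm v + 1)"
  have d'pos: "d' > 0" unfolding d'_def using d by (simp add: add_nonneg_pos)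
  show ?thesis
  proof (intro exI[of _ d'] conjI allI impI d'pos, elim conjE)
    fix t :: real assume t0: "0 < t" and td: "t < d'"
    have tnd: "t * (norm u + norm v) < d"
    proof -
      have "t * (norm u + norm v + 1) < d" using td d unfolding d'_def
        by (simp add: pos_less_divide_eq add_nonneg_pos)
      then have "t * (norm u + norm v) + t < d" by (simp add: algebra_simps)
      then show ?thesis using t0 by linarith
    qed
    define \<psi> where "\<psi> = (\<lambda>s. F (w + s *\<^sub>R u + t *\<^sub>R v) - F (w + s *\<^sub>R u))"
    define \<psi>' where "\<psi>' = (\<lambda>s. G (w + s *\<^sub>R u + t *\<^sub>R v) \<bullet> u - G (w + s *\<^sub>R u) \<bullet> u)"
    have der: "(\<psi> has_real_derivative \<psi>' s) (at s)" for s
    proof -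
      have i1: "((\<lambda>s. w + s *\<^sub>R u + t *\<^sub>R v) has_derivative (\<lambda>h. h *\<^sub>R u)) (at s)"
        by (auto intro!: derivative_eq_intros)
      have i2: "((\<lambda>s. w + s *\<^sub>R u) has_derivative (\<lambda>h. h *\<^sub>R u)) (at s)"
        by (auto intro!: derivative_eq_intros)
      have "(\<psi> has_derivative (\<lambda>h. G (w + s *\<^sub>R u + t *\<^sub>R v) \<bullet> (h *\<^sub>R u) - G (w + s *\<^sub>R u) \<bullet> (h *\<^sub>R u))) (at s)"
        unfolding \<psi>_def
        by (intro has_derivative_diff has_derivative_compose[OF i1 dF] has_derivative_compose[OF i2 dF])
      then show ?thesis unfolding has_field_derivative_def \<psi>'_def
        by (rule has_derivative_eq_rhs) (auto simp: fun_eq_iff algebra_simps)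
    qed
    obtain \<xi> where \<xi>: "0 < \<xi>" "\<xi> < t" and mvt: "\<psi> t - \<psi> 0 = (t - 0) * \<psi>' \<xi>"
      using MVT2[OF t0, of \<psi> \<psi>'] der by blast
    have \<Delta>: "F (w + t *\<^sub>R u + t *\<^sub>R v) - F (w + t *\<^sub>R u) - F (w + t *\<^sub>R v) + F w = t * \<psi>' \<xi>"
      using mvt unfolding \<psi>_def by simp
    define y1 where "y1 = w + \<xi> *\<^sub>R u + t *\<^sub>R v"
    define y2 where "y2 = w + \<xi> *\<^sub>R u"
    define r1 where "r1 = G y1 - G w - L (y1 - w)"
    define r2 where "r2 = G y2 - G w - L (y2 - w)"
    have n1: "norm (y1 - w) \<le> t * (norm u + norm v)"
    proof -
      have "y1 - w = \<xi> *\<^sub>R u + t *\<^sub>R v" unfolding y1_def by simp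
      then have "norm (y1 - w) \<le> norm (\<xi> *\<^sub>R u) + norm (t *\<^sub>R v)"
        by (metis norm_triangle_ineq)
      also have "... = \<xi> * norm u + t * norm v" using \<xi> t0 by simp
      also have "... \<le> t * norm u + t * norm v" using \<xi> by (simp add: mult_right_mono)
      finally show ?thesis by (simp add: algebra_simps)
    qed
    have n2: "norm (y2 - w) \<le> t * norm u"
    proof -
      have "norm (y2 - w) = \<xi> * norm u" unfolding y2_def using \<xi> by simp
      also have "... \<le> t * norm u" using \<xi> by (simp add: mult_right_mono)
      finally show ?thesis .
    qed
    have nr1: "norm r1 \<le> e * (t * (norm u + norm v))"
    proof -
      have "norm (y1 - w) < d" using n1 tnd by linarith
      then have "norm r1 \<le> e * norm (y1 - w)" unfolding r1_def by (rule dd)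
      also have "... \<le> e * (t * (norm u + norm v))" using n1 e by (simp add: mult_left_mono)
      finally show ?thesis .
    qed
    have nr2: "norm r2 \<le> e * (t * norm u)"
    proof -
      have "t * norm u \<le> t * (norm u + norm v)" using t0 by (simp add: mult_left_mono)
      then have "norm (y2 - w) < d" using n2 tnd by linarith
      then have "norm r2 \<le> e * norm (y2 - w)" unfolding r2_def by (rule dd)
      also have "... \<le> e * (t * norm u)" using n2 e by (simp add: mult_left_mono)
      finally show ?thesis .
    qed
    have Gd: "G y1 - G y2 = t *\<^sub>R L v + (r1 - r2)"
    proof -
      have "L (y1 - w) - L (y2 - w) = t *\<^sub>R L v"
        unfolding y1_def y2_def by (simp add: L.add L.scaleR)
      then show ?thesis unfolding r1_def r2_def by (simp add: algebra_simps)
    qed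
    have "\<psi>' \<xi> = (G y1 - G y2) \<bullet> u" unfolding \<psi>'_def y1_def y2_def by (simp add: inner_diff_left)
    also have "... = t * (L v \<bullet> u) + (r1 - r2) \<bullet> u" unfolding Gd by (simp add: inner_add_left)
    finally have p: "\<psi>' \<xi> = t * (L v \<bullet> u) + (r1 - r2) \<bullet> u" .
    have "\<bar>(r1 - r2) \<bullet> u\<bar> \<le> norm (r1 - r2) * norm u" by (rule Cauchy_Schwarz_ineq2)
    also have "... \<le> (norm r1 + norm r2) * norm u" by (simp add: mult_right_mono norm_triangle_ineq4)
    also have "... \<le> (e * (t * (norm u + norm v)) + e * (t * norm u)) * norm u"
      using nr1 nr2 by (simp add: mult_right_mono)
    finally have rb: "\<bar>(r1 - r2) \<bullet> u\<bar> \<le> e * t * ((2 * norm u + norm v) * norm u)"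
      by (simp add: algebra_simps)
    have "\<bar>t * \<psi>' \<xi> - t^2 * (L v \<bullet> u)\<bar> = t * \<bar>(r1 - r2) \<bullet> u\<bar>"
    proof -
      have "t * \<psi>' \<xi> - t^2 * (L v \<bullet> u) = t * ((r1 - r2) \<bullet> u)"
        unfolding p by (simp add: power2_eq_square algebra_simps)
      then show ?thesis using t0 by (simp add: abs_mult)
    qed
    also have "... \<le> t * (e * t * ((2 * norm u + norm v) * norm u))" using rb t0 by (simp add: mult_left_mono)
    finally show "\<bar>(F (w + t *\<^sub>R u + t *\<^sub>R v) - F (w + t *\<^sub>R u) - F (w + t *\<^sub>R v) + F w) - t^2 * (L v \<bullet> u)\<bar>
       \<le> e * t^2 * ((2 * norm u + norm v) * norm u)" unfolding \<Delta> by (simp add: power2_eq_square algebra_simps)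
  qed
qed

lemma clairaut:
  fixes F :: "real^'n \<Rightarrow> real" and G :: "real^'n \<Rightarrow> real^'n"
  assumes dF: "\<And>x. (F has_derivative (\<lambda>h. G x \<bullet> h)) (at x)"
    and dG: "(G has_derivative L) (at w)"
  shows "L u \<bullet> v = L v \<bullet> u"
proof (rule ccontr)
  assume ne: "L u \<bullet> v \<noteq> L v \<bullet> u"
  define c where "c = \<bar>L v \<bullet> u - L u \<bullet> v\<bar>"
  have c: "c > 0" using ne unfolding c_def by simp
  define M1 where "M1 = (2 * norm u + norm v) * norm u"
  define M2 where "M2 = (2 * norm v + norm u) * norm v"
  have M: "M1 \<ge> 0" "M2 \<ge> 0" unfolding M1_def M2_def by simp_all
  define e where "e = c / (2 * (M1 + M2 + 1))"
  have e: "e > 0" unfolding e_def using c M by simp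
  obtain d1 where d1: "d1 > 0" and h1: "\<And>t. 0 < t \<Longrightarrow> t < d1 \<Longrightarrow>
     \<bar>(F (w + t *\<^sub>R u + t *\<^sub>R v) - F (w + t *\<^sub>R u) - F (w + t *\<^sub>R v) + F w) - t^2 * (L v \<bullet> u)\<bar>
       \<le> e * t^2 * M1"
    using clairaut_side[OF dF dG e, of u v] unfolding M1_def by blast
  obtain d2 where d2: "d2 > 0" and h2: "\<And>t. 0 < t \<Longrightarrow> t < d2 \<Longrightarrow>
     \<bar>(F (w + t *\<^sub>R v + t *\<^sub>R u) - F (w + t *\<^sub>R v) - F (w + t *\<^sub>R u) + F w) - t^2 * (L u \<bullet> v)\<bar>
       \<le> e * t^2 * M2"
    using clairaut_side[OF dF dG e, of v u] unfolding M2_def by blast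
  define t where "t = min d1 d2 / 2"
  have t: "0 < t" "t < d1" "t < d2" unfolding t_def using d1 d2 by auto
  have sw: "w + t *\<^sub>R v + t *\<^sub>R u = w + t *\<^sub>R u + t *\<^sub>R v" by (simp add: algebra_simps)
  have "t^2 * c \<le> e * t^2 * M1 + e * t^2 * M2"
  proof -
    have "t^2 * c = \<bar>t^2*(L v \<bullet> u) - t^2*(L u \<bullet> v)\<bar>"
      unfolding c_def by (simp add: abs_mult right_diff_distrib[symmetric])
    also have "... \<le> e * t^2 * M1 + e * t^2 * M2"
      using h1[OF t(1,2)] h2[OF t(1,3)] unfolding sw abs_le_iff by linarith
    finally show ?thesis .
  qed
  then have "t^2 * c \<le> t^2 * (e * (M1 + M2))" by (simp add: algebra_simps)
  then have "c \<le> e * (M1 + M2)" using t(1) by simp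
  moreover have "e * (M1 + M2) < c"
  proof -
    have "e * (M1 + M2) = c * (M1 + M2) / (2 * (M1 + M2 + 1))" unfolding e_def by simp
    also have "... < c" using c M by (simp add: pos_divide_less_eq)
    finally show ?thesis .
  qed
  ultimately show False by simp
qed



lemma quad_zero:
  fixes a b :: real
  assumes "\<And>t. 2*t*a + t^2*b \<le> 0"
  shows "a = 0"
proof (rule ccontr)
  assume "a \<noteq> 0"
  define c where "c = \<bar>b\<bar> + 1"
  have c: "c > 0" unfolding c_def by simp
  define t where "t = a / c"
  have h0: "t^2 * (-\<bar>b\<bar>) \<le> t^2*b" by (rule mult_left_mono) simp_all
  have h2: "t^2*\<bar>b\<bar> \<le> t^2*c" by (rule mult_left_mono) (simp_all add: c_def)
  have "t^2*b \<ge> - (t^2 * c)" using h0 h2 by simp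
  moreover have "t^2 * c = a^2 / c" using c unfolding t_def by (simp add: power2_eq_square field_simps)
  moreover have "2*t*a = 2 * (a^2/c)" unfolding t_def by (simp add: power2_eq_square field_simps)
  moreover have "a^2/c > 0" using c \<open>a \<noteq> 0\<close> by simp
  ultimately have "2*t*a + t^2*b > 0" by linarith
  with assms[of t] show False by simp
qed

context
  fixes K A :: "real^'n^'n"
  assumes Kpos: "\<And>x. x \<noteq> 0 \<Longrightarrow> x \<bullet> (K *v x) > 0"
    and Ksym: "\<And>x y. x \<bullet> (K *v y) = y \<bullet> (K *v x)"
    and KAsym: "\<And>x y. x \<bullet> (K *v (A *v y)) = y \<bullet> (K *v (A *v x))"
begin

lemma adj: "x \<bullet> (K *v (A *v y)) = (A *v x) \<bullet> (K *v y)"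
  using KAsym Ksym by metis

lemma Bzero: "(0::real^'n) \<bullet> (K *v y) = 0" by simp

lemma eig_exists:
  assumes S: "subspace S" and inv: "\<And>x. x \<in> S \<Longrightarrow> A *v x \<in> S"
    and nz: "x1 \<in> S" "x1 \<noteq> 0"
  shows "\<exists>x\<in>S. x \<noteq> 0 \<and> (\<exists>l. A *v x = l *\<^sub>R x)"
proof -
  define R where "R = (\<lambda>x::real^'n. (x \<bullet> (K *v (A *v x))) / (x \<bullet> (K *v x)))"
  define T where "T = sphere (0::real^'n) 1 \<inter> S"
  have cT: "compact T" unfolding T_def
    by (intro compact_Int_closed compact_sphere closed_subspace S)
  have x1T: "(1 / norm x1) *\<^sub>R x1 \<in> T" unfolding T_def using nz S
    by (auto simp: subspace_scale)
  have contR: "continuous_on T R" unfolding R_def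
  proof (intro continuous_on_divide)
    show "continuous_on T (\<lambda>x. x \<bullet> (K *v (A *v x)))"
      unfolding matrix_vector_mul_assoc by (intro continuous_intros linear_continuous_on matrix_vector_mul_bounded_linear)
    show "continuous_on T (\<lambda>x. x \<bullet> (K *v x))"
      by (intro continuous_intros linear_continuous_on matrix_vector_mul_bounded_linear)
    show "\<forall>x\<in>T. x \<bullet> (K *v x) \<noteq> 0" unfolding T_def using Kpos
      by (metis IntD1 less_irrefl mem_sphere_0 norm_zero zero_neq_one)
  qed
  obtain x0 where x0T: "x0 \<in> T" and x0max: "\<And>y. y \<in> T \<Longrightarrow> R y \<le> R x0"
    using continuous_attains_sup[OF cT _ contR] x1T by blast
  have x0S: "x0 \<in> S" and x0nz: "x0 \<noteq> 0" using x0T unfolding T_def by auto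
  define l where "l = R x0"
  have scal: "R (c *\<^sub>R y) = R y" if "c \<noteq> 0" for c y
    unfolding R_def using that
    by (simp add: matrix_vector_mult_scaleR power2_eq_square)
  have c1: "y \<bullet> (K *v (A *v y)) \<le> l * (y \<bullet> (K *v y))" if yS: "y \<in> S" for y
  proof (cases "y = 0")
    case True then show ?thesis by simp
  next
    case False
    have "(1 / norm y) *\<^sub>R y \<in> T" unfolding T_def using yS False S
      by (auto simp: subspace_scale)
    then have "R y \<le> l" using x0max scal[of "1/norm y" y] False unfolding l_def by (metis norm_eq_zero divide_eq_0_iff zero_neq_one)
    moreover have "y \<bullet> (K *v y) > 0" using Kpos False by simp
    ultimately show ?thesis unfolding R_def by (simp add: pos_divide_le_eq)
  qed
  have c2: "x0 \<bullet> (K *v (A *v x0)) = l * (x0 \<bullet> (K *v x0))"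
    using Kpos[OF x0nz] unfolding l_def R_def by simp
  have c3: "y \<bullet> (K *v (A *v x0 - l *\<^sub>R x0)) = 0" if yS: "y \<in> S" for y
  proof -
    have "2*t*(y \<bullet> (K *v (A *v x0 - l *\<^sub>R x0))) + t^2*(y \<bullet> (K *v (A *v y)) - l * (y \<bullet> (K *v y))) \<le> 0" for t
    proof -
      have zS: "x0 + t *\<^sub>R y \<in> S" using x0S yS S by (simp add: subspace_add subspace_scale)
      have e1: "(x0 + t *\<^sub>R y) \<bullet> (K *v (A *v (x0 + t *\<^sub>R y))) =
         x0 \<bullet> (K *v (A *v x0)) + t * (x0 \<bullet> (K *v (A *v y))) + t * (y \<bullet> (K *v (A *v x0)))
          + t^2 * (y \<bullet> (K *v (A *v y)))"
        by (simp add: matrix_vector_right_distrib matrix_vector_mult_scaleR inner_add_left inner_add_right power2_eq_square algebra_simps)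
      have e2: "(x0 + t *\<^sub>R y) \<bullet> (K *v (x0 + t *\<^sub>R y)) =
         x0 \<bullet> (K *v x0) + t * (x0 \<bullet> (K *v y)) + t * (y \<bullet> (K *v x0))
          + t^2 * (y \<bullet> (K *v y))"
        by (simp add: matrix_vector_right_distrib matrix_vector_mult_scaleR inner_add_left inner_add_right power2_eq_square algebra_simps)
      have e3: "y \<bullet> (K *v (A *v x0 - l *\<^sub>R x0)) = y \<bullet> (K *v (A *v x0)) - l * (y \<bullet> (K *v x0))"
        by (simp add: matrix_vector_mult_diff_distrib matrix_vector_mult_scaleR inner_diff_right)
      have "x0 \<bullet> (K *v (A *v y)) = y \<bullet> (K *v (A *v x0))" using KAsym by simp
      moreover have "x0 \<bullet> (K *v y) = y \<bullet> (K *v x0)" using Ksym by simp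
      ultimately show ?thesis using c1[OF zS] e1 e2 e3 c2 by (simp add: algebra_simps power2_eq_square)
    qed
    then show ?thesis by (rule quad_zero)
  qed
  have yS: "A *v x0 - l *\<^sub>R x0 \<in> S" using inv[OF x0S] x0S S by (simp add: subspace_diff subspace_scale)
  have "A *v x0 - l *\<^sub>R x0 = 0" using c3[OF yS] Kpos by (metis less_irrefl)
  then show ?thesis using x0S x0nz by (intro bexI[of _ x0]) auto
qed


lemma eig_basis:
  assumes "subspace S" "\<And>x. x \<in> S \<Longrightarrow> A *v x \<in> S"
  shows "\<exists>B. B \<subseteq> S \<and> independent B \<and> span B = S \<and> (\<forall>b\<in>B. \<exists>l. A *v b = l *\<^sub>R b)"
  using assms
proof (induction "dim S" arbitrary: S rule: less_induct)
  case less
  show ?case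
  proof (cases "\<exists>x\<in>S. x \<noteq> 0")
    case False
    then have "S = {0}" using less.prems(1) subspace_0 by blast
    then show ?thesis by (intro exI[of _ "{}"]) (auto simp: independent_empty)
  next
    case True
    then obtain x1 where "x1 \<in> S" "x1 \<noteq> 0" by auto
    from eig_exists[OF less.prems this] obtain x0 l where x0: "x0 \<in> S" "x0 \<noteq> 0" "A *v x0 = l *\<^sub>R x0" by auto
    define S' where "S' = {y \<in> S. x0 \<bullet> (K *v y) = 0}"
    have sub': "subspace S'" unfolding S'_def using less.prems(1)
      by (auto simp: subspace_def matrix_vector_right_distrib matrix_vector_mult_scaleR inner_add_right)
    have inv': "A *v y \<in> S'" if "y \<in> S'" for y
    proof -
      have "x0 \<bullet> (K *v (A *v y)) = (A *v x0) \<bullet> (K *v y)" by (rule adj)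
      also have "... = l * (x0 \<bullet> (K *v y))" using x0(3) by (simp add: matrix_vector_mult_scaleR)
      finally show ?thesis using that less.prems(2) unfolding S'_def by auto
    qed
    have x0n: "x0 \<notin> S'" using Kpos[OF x0(2)] unfolding S'_def by auto
    have sS: "S' \<subseteq> S" unfolding S'_def by auto
    have "dim S' < dim S"
    proof (rule dim_psubset)
      have e1: "span S' = S'" "span S = S" using sub' less.prems(1) by (simp_all only: span_eq_iff)
      show "span S' \<subset> span S" unfolding e1 using sS x0 x0n by auto
    qed
    from less.hyps[OF this sub' inv'] obtain B' where
      B': "B' \<subseteq> S'" "independent B'" "span B' = S'" "\<forall>b\<in>B'. \<exists>l. A *v b = l *\<^sub>R b" by auto
    have "span (insert x0 B') = S"
    proof
      show "span (insert x0 B') \<subseteq> S"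
        by (metis B'(1) insert_subset less.prems(1) sS span_minimal subset_trans x0(1))
      show "S \<subseteq> span (insert x0 B')"
      proof
        fix x assume xS: "x \<in> S"
        define k where "k = (x0 \<bullet> (K *v x)) / (x0 \<bullet> (K *v x0))"
        have "x - k *\<^sub>R x0 \<in> S'"
          unfolding S'_def using xS x0 less.prems(1) Kpos[OF x0(2)]
          by (auto simp: subspace_diff subspace_scale k_def matrix_vector_mult_diff_distrib matrix_vector_mult_scaleR inner_diff_right)
        then show "x \<in> span (insert x0 B')" unfolding span_insert B'(3) by auto
      qed
    qed
    moreover have "independent (insert x0 B')"
      using B' x0n by (intro independent_insertI) auto
    ultimately show ?thesis using B' x0 sS by (intro exI[of _ "insert x0 B'"]) auto
  qed
qed

lemma diagonalizable: "real_diagonalizable A"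
proof -
  obtain B where B: "independent B" "span B = UNIV" "\<forall>b\<in>B. \<exists>l. A *v b = l *\<^sub>R b"
    using eig_basis[of UNIV] by auto
  have fB: "finite B" using B(1) independent_bound by blast
  have "card B = dim (UNIV :: (real^'n) set)"
    using B by (intro basis_card_eq_dim) auto
  then have cB: "card (UNIV::'n set) = card B" by (simp add: dim_UNIV)
  obtain v where v: "bij_betw v (UNIV::'n set) B"
    using finite_same_card_bij[OF finite_class.finite_UNIV fB cB] by auto
  define mu where "mu = (\<lambda>c. SOME l. A *v v c = l *\<^sub>R v c)"
  have mu: "A *v v c = mu c *\<^sub>R v c" for c
  proof -
    have "v c \<in> B" using v bij_betwE by blast
    then show ?thesis unfolding mu_def using B(3) by (metis (mono_tags, lifting) someI_ex)
  qed
  define P :: "real^'n^'n" where "P = (\<chi> r c. v c $ r)"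
  define D :: "real^'n^'n" where "D = (\<chi> i j. if i = j then mu i else 0)"
  have Pax: "P *v axis c 1 = v c" for c
    unfolding matrix_vector_mult_basis P_def column_def by (simp add: vec_eq_iff)
  have AP: "A ** P = P ** D"
  proof -
    have "(A ** P) $ r $ c = (P ** D) $ r $ c" for r c
    proof -
      have "(A ** P) $ r $ c = (A *v v c) $ r"
        by (simp add: matrix_matrix_mult_def matrix_vector_mult_def P_def)
      also have "... = mu c * v c $ r" by (simp add: mu)
      also have "... = (P ** D) $ r $ c"
        by (simp add: matrix_matrix_mult_def P_def D_def if_distrib cong: if_cong)
      finally show ?thesis .
    qed
    then show ?thesis by (simp add: vec_eq_iff)
  qed
  have "surj ((*v) P)"
  proof -
    have "subspace (range ((*v) P))"
      by (simp add: linear_subspace_image)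
    moreover have "B \<subseteq> range ((*v) P)" using v Pax
      by (metis bij_betw_imp_surj_on image_subset_iff rangeI)
    ultimately have "span B \<subseteq> range ((*v) P)" by (simp add: span_minimal)
    then show ?thesis using B(2) by auto
  qed
  then obtain P' where P': "P ** P' = mat 1" using matrix_right_invertible_surjective by blast
  then have invP: "invertible P" unfolding invertible_def using matrix_left_right_inverse1 by blast
  then have Pinv: "matrix_inv P ** P = mat 1"
    unfolding matrix_inv_def invertible_def by (metis (mono_tags, lifting) someI_ex)
  have "matrix_inv P ** A ** P = D"
    by (metis AP Pinv matrix_mul_assoc matrix_mul_lid)
  moreover have "\<forall>i j. i \<noteq> j \<longrightarrow> D $ i $ j = 0" unfolding D_def by simp
  ultimately show ?thesis unfolding real_diagonalizable_def using invP by blast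
qed

end

lemma sym_form:
  fixes M :: "real^'n^'n"
  assumes "\<And>a b. M $ a $ b = M $ b $ a"
  shows "x \<bullet> (M *v y) = y \<bullet> (M *v x)"
proof -
  have "x \<bullet> (M *v y) = (\<Sum>a\<in>UNIV. \<Sum>b\<in>UNIV. x $ a * M $ a $ b * y $ b)"
    by (simp add: inner_vec_def matrix_vector_mult_def sum_distrib_left mult.assoc)
  also have "... = (\<Sum>b\<in>UNIV. \<Sum>a\<in>UNIV. x $ a * M $ a $ b * y $ b)" by (rule sum.swap)
  also have "... = y \<bullet> (M *v x)"
    by (simp add: inner_vec_def matrix_vector_mult_def sum_distrib_left assms mult.commute mult.left_commute)
  finally show ?thesis .
qed

theorem lemma3p1:
  fixes f :: "real^'n \<Rightarrow> real^'n"
    and J :: "real^'n \<Rightarrow> real^'n^'n"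
    and \<eta> :: "real^'n \<Rightarrow> real"
    and g :: "real^'n \<Rightarrow> real^'n"
    and H :: "real^'n \<Rightarrow> real^'n^'n"
    and I :: "'n set"
  assumes f_deriv: "\<And>w. (f has_derivative (\<lambda>h. J w *v h)) (at w)"
    and J_diff: "\<And>w. J differentiable (at w)"
    and \<eta>_deriv: "\<And>w. (\<eta> has_derivative (\<lambda>h. g w \<bullet> h)) (at w)"
    and g_deriv: "\<And>w. (g has_derivative (\<lambda>h. H w *v h)) (at w)"
    and f1_zero: "\<And>w i. i \<in> I \<Longrightarrow> f w $ i = 0"
    and f2_indep_w1: "\<And>w i j. i \<in> I \<Longrightarrow> j \<notin> I \<Longrightarrow> J w $ j $ i = 0"
    and \<eta>_convex_w2: "\<And>w v. v \<noteq> 0 \<Longrightarrow> (\<forall>i\<in>I. v $ i = 0) \<Longrightarrow> v \<bullet> (H w *v v) > 0"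
    and \<eta>_conserved: "\<And>w h. g w \<bullet> (J w *v h) = 0"
  shows "hyperbolic f"
proof -
  have fi_deriv: "((\<lambda>x. f x $ i) has_derivative (\<lambda>h. (J w *v h) $ i)) (at w)" for w i
    by (rule bounded_linear.has_derivative[OF bounded_linear_vec_nth f_deriv])
  have Jrow: "J w $ i $ k = 0" if "i \<in> I" for w i k
  proof -
    have "((\<lambda>x. f x $ i) has_derivative (\<lambda>h. 0)) (at w)"
      using f1_zero[OF that] by simp
    from has_derivative_unique[OF fi_deriv this]
    have "(J w *v axis k 1) $ i = 0" by meson
    then show ?thesis by (simp add: matrix_vector_mult_basis column_def)
  qed
  have Hsym: "H w $ a $ b = H w $ b $ a" for w a b
  proof -
    have "(H w *v axis a 1) \<bullet> axis b 1 = (H w *v axis b 1) \<bullet> axis a 1"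
      by (rule clairaut[OF \<eta>_deriv g_deriv])
    then show ?thesis by (simp add: matrix_vector_mult_basis column_def inner_axis)
  qed
  have HJsym: "(H w ** J w) $ a $ b = (H w ** J w) $ b $ a" for w a b
  proof -
    obtain DJ where DJ: "(J has_derivative DJ) (at w)" using J_diff[of w] unfolding differentiable_def by blast
    define Li where "Li = (\<lambda>i h. DJ h $ i)"
    have Gi: "((\<lambda>x. J x $ i) has_derivative Li i) (at w)" for i
      unfolding Li_def by (rule bounded_linear.has_derivative[OF bounded_linear_vec_nth DJ])
    have Fi: "((\<lambda>x. f x $ i) has_derivative (\<lambda>h. (J x $ i) \<bullet> h)) (at x)" for x i
      using fi_deriv[where w=x and i=i] by (simp add: matrix_vector_mult_def inner_vec_def)
    have cl: "Li i u \<bullet> v = Li i v \<bullet> u" for i u v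
      by (rule clairaut[OF Fi Gi])
    have gi: "((\<lambda>x. g x $ i) has_derivative (\<lambda>h. (H w *v h) $ i)) (at w)" for i
      by (rule bounded_linear.has_derivative[OF bounded_linear_vec_nth g_deriv])
    have Jik: "((\<lambda>x. J x $ i $ k) has_derivative (\<lambda>h. Li i h $ k)) (at w)" for i k
      by (rule bounded_linear.has_derivative[OF bounded_linear_vec_nth Gi])
    have Z: "(\<Sum>i\<in>UNIV. H w $ i $ j * J w $ i $ k) = - (\<Sum>i\<in>UNIV. g w $ i * (Li i (axis j 1) $ k))" for j k
    proof -
      have dPhi: "((\<lambda>x. \<Sum>i\<in>UNIV. g x $ i * J x $ i $ k) has_derivative
           (\<lambda>h. \<Sum>i\<in>UNIV. g w $ i * (Li i h $ k) + (H w *v h) $ i * J w $ i $ k)) (at w)"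
        by (intro has_derivative_sum has_derivative_mult gi Jik)
      have "(\<lambda>x. \<Sum>i\<in>UNIV. g x $ i * J x $ i $ k) = (\<lambda>x. 0)"
      proof
        fix x
        have "g x \<bullet> (J x *v axis k 1) = 0" by (rule \<eta>_conserved)
        then show "(\<Sum>i\<in>UNIV. g x $ i * J x $ i $ k) = 0"
          by (simp add: matrix_vector_mult_basis column_def inner_vec_def)
      qed
      then have "((\<lambda>x. \<Sum>i\<in>UNIV. g x $ i * J x $ i $ k) has_derivative (\<lambda>h. 0)) (at w)" by simp
      from has_derivative_unique[OF dPhi this]
      have "(\<Sum>i\<in>UNIV. g w $ i * (Li i (axis j 1) $ k) + (H w *v axis j 1) $ i * J w $ i $ k) = 0"
        by meson
      then show ?thesis by (simp add: sum.distrib matrix_vector_mult_basis column_def algebra_simps)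
    qed
    have LL: "Li i (axis j 1) $ k = Li i (axis k 1) $ j" for i j k
      using cl[of i "axis j 1" "axis k 1"] by (simp add: inner_axis)
    have "(H w ** J w) $ a $ b = (\<Sum>i\<in>UNIV. H w $ i $ a * J w $ i $ b)"
      unfolding matrix_matrix_mult_def vec_lambda_beta by (rule sum.cong) (auto intro: Hsym)
    also have "... = - (\<Sum>i\<in>UNIV. g w $ i * (Li i (axis a 1) $ b))" by (rule Z)
    also have "... = - (\<Sum>i\<in>UNIV. g w $ i * (Li i (axis b 1) $ a))" using LL[of _ a b] by simp
    also have "... = (\<Sum>i\<in>UNIV. H w $ i $ b * J w $ i $ a)" by (rule Z[symmetric])
    also have "... = (H w ** J w) $ b $ a"
      unfolding matrix_matrix_mult_def vec_lambda_beta by (rule sum.cong) (auto intro: Hsym)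
    finally show ?thesis .
  qed
  have diag: "real_diagonalizable (J w)" for w
  proof -
    define K :: "real^'n^'n" where
      "K = (\<chi> a b. if a \<notin> I \<and> b \<notin> I then H w $ a $ b else if a = b then 1 else 0)"
    have Ksym': "K $ a $ b = K $ b $ a" for a b unfolding K_def using Hsym by auto
    have KJ: "(K ** J w) $ a $ b = (if a \<notin> I \<and> b \<notin> I then (H w ** J w) $ a $ b else 0)" for a b
    proof (cases "a \<in> I")
      case True
      have "(K ** J w) $ a $ b = (\<Sum>c\<in>UNIV. (if a = c then 1 else 0) * J w $ c $ b)"
        unfolding matrix_matrix_mult_def K_def using True by simp
      also have "... = (\<Sum>c\<in>UNIV. if a = c then J w $ c $ b else 0)"
        by (rule sum.cong) auto
      also have "... = J w $ a $ b" by simp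
      finally show ?thesis using True Jrow by simp
    next
      case False
      have "(K ** J w) $ a $ b = (\<Sum>c\<in>UNIV. (if c \<notin> I then H w $ a $ c else 0) * J w $ c $ b)"
        unfolding matrix_matrix_mult_def K_def vec_lambda_beta using False by (intro sum.cong) auto
      also have "... = (\<Sum>c\<in>UNIV. H w $ a $ c * J w $ c $ b)"
        by (intro sum.cong) (auto simp: Jrow)
      also have "... = (H w ** J w) $ a $ b" by (simp add: matrix_matrix_mult_def)
      finally have e: "(K ** J w) $ a $ b = (H w ** J w) $ a $ b" .
      show ?thesis
      proof (cases "b \<in> I")
        case True
        have "(\<Sum>c\<in>UNIV. H w $ a $ c * J w $ c $ b) = 0"
          by (intro sum.neutral) (metis Jrow True f2_indep_w1 mult_zero_right)
        then show ?thesis using e True by (simp add: matrix_matrix_mult_def)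
      next
        case False
        then show ?thesis using e \<open>a \<notin> I\<close> by simp
      qed
    qed
    have KJsym: "(K ** J w) $ a $ b = (K ** J w) $ b $ a" for a b
      unfolding KJ using HJsym by auto
    have Kpos: "x \<bullet> (K *v x) > 0" if xnz: "x \<noteq> 0" for x
    proof -
      define v where "v = (\<chi> a. if a \<in> I then 0 else x $ a)"
      have Kx: "K *v x = (\<chi> a. if a \<in> I then x $ a else (H w *v v) $ a)"
      proof -
        have "(K *v x) $ a = (if a \<in> I then x $ a else (H w *v v) $ a)" for a
        proof (cases "a \<in> I")
          case True
          have "(K *v x) $ a = (\<Sum>j\<in>UNIV. if a = j then x $ j else 0)"
            unfolding K_def matrix_vector_mult_def vec_lambda_beta using True by (intro sum.cong) auto
          then show ?thesis using True by simp
        next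
          case False
          then show ?thesis unfolding K_def matrix_vector_mult_def v_def vec_lambda_beta
            by (auto intro!: sum.cong)
        qed
        then show ?thesis by (simp add: vec_eq_iff)
      qed
      define P where "P = (\<Sum>a\<in>UNIV. if a \<in> I then (x $ a)^2 else 0)"
      have P0: "P \<ge> 0" unfolding P_def by (intro sum_nonneg) auto
      have xKx: "x \<bullet> (K *v x) = P + v \<bullet> (H w *v v)"
        unfolding Kx P_def inner_vec_def v_def
        by (simp add: sum.distrib[symmetric] power2_eq_square; (intro sum.cong; auto simp: power2_eq_square)?)
      show ?thesis
      proof (cases "v = 0")
        case False
        have "v \<bullet> (H w *v v) > 0" using \<eta>_convex_w2[OF False] unfolding v_def by simp
        then show ?thesis using xKx P0 by simp
      next
        case True
        obtain a where a: "x $ a \<noteq> 0" using xnz by (metis vec_eq_iff zero_index)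
        have aI: "a \<in> I" using True a unfolding v_def by (metis (mono_tags, lifting) vec_lambda_beta zero_index)
        have "(x $ a)^2 \<le> P" unfolding P_def
          using member_le_sum[of a UNIV "\<lambda>a. if a \<in> I then (x $ a)^2 else 0"] aI by simp
        moreover have "(x $ a)^2 > 0" using a by simp
        ultimately have "P > 0" by linarith
        then show ?thesis using xKx True by simp
      qed
    qed
    have Ksym: "x \<bullet> (K *v y) = y \<bullet> (K *v x)" for x y by (rule sym_form[OF Ksym'])
    have KAsym: "x \<bullet> (K *v (J w *v y)) = y \<bullet> (K *v (J w *v x))" for x y
      unfolding matrix_vector_mul_assoc by (rule sym_form[OF KJsym])
    show ?thesis by (rule diagonalizable[OF Kpos Ksym KAsym])
  qed
  show ?thesis unfolding hyperbolic_def
  proof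
    fix w
    have "frechet_derivative f (at w) = (\<lambda>h. J w *v h)"
      using frechet_derivative_at[OF f_deriv] by simp
    then show "f differentiable at w \<and> real_diagonalizable (matrix (frechet_derivative f (at w)))"
      using diag[of w] f_deriv[of w] by (auto simp: matrix_of_matrix_vector_mul differentiable_def)
  qed
qed

end
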